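(* Let $X$ and $Y$ be $\sigma$-compact metric spaces such that $X$ has no isolated points. For every closed set $T\subseteq X\times Y$ there exist a countable set $A\subseteq X$ and a function $f:A\to Y$ such that $L_f=T$.
   Context: For a function $f:A\to Y$ with $A\subseteq X$, $L_f$ denotes the set of accumulation points in $X\times Y$ of its graph $gr(f)=\{(x,f(x)):x\in A\}$. A space is $\sigma$-compact if it is a countable union of compact sets. *)

theory Defs
  imports "HOL-Analysis.Analysis"
begin

text \<open>A subset of a metric space is sigma-compact if it is a countable union of compact sets
  (a finite union is covered by padding with empty sets).\<close>
definition sigma_compact :: "'a::metric_space set \<Rightarrow> bool" where
  "sigma_compact S \<longleftrightarrow> (\<exists>F :: nat \<Rightarrow> 'a set. (\<forall>n. compact (F n)) \<and> S = (\<Union>n. F n))"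

definition graph_on :: "'a set \<Rightarrow> ('a \<Rightarrow> 'b) \<Rightarrow> ('a \<times> 'b) set" where
  "graph_on A f = (\<lambda>x. (x, f x)) ` A"

definition acc_points_in :: "'a::topological_space set \<Rightarrow> 'a set \<Rightarrow> 'a set" where
  "acc_points_in Z G = {p \<in> Z. p islimpt G}"

end

theory Submission
  imports Defs
begin

lemma compact_countable_dense:
  fixes K :: "'a::metric_space set" assumes "compact K"
  shows "\<exists>D. countable D \<and> D \<subseteq> K \<and> (\<forall>x\<in>K. \<forall>e>0. \<exists>d\<in>D. dist x d < e)"
proof -
  have "\<forall>n::nat. \<exists>k. finite k \<and> k \<subseteq> K \<and> K \<subseteq> (\<Union>x\<in>k. ball x (1/Suc n))"
    using seq_compact_imp_totally_bounded[OF compact_imp_seq_compact[OF assms]] by simp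
  then have "\<exists>F. \<forall>n::nat. finite (F n) \<and> F n \<subseteq> K \<and> K \<subseteq> (\<Union>x\<in>F n. ball x (1/Suc n))"
    by (rule choice)
  then obtain F where F: "\<And>n. finite (F n) \<and> F n \<subseteq> K \<and> K \<subseteq> (\<Union>x\<in>F n. ball x (1/Suc n))"
    by blast
  show ?thesis
  proof (intro exI[of _ "\<Union>n. F n"] conjI ballI allI impI)
    show "countable (\<Union>n. F n)" using F by (simp add: countable_finite)
    show "(\<Union>n. F n) \<subseteq> K" using F by blast
    fix x and e :: real assume x: "x\<in>K" and e: "e>0"
    then obtain n where n: "1/Suc n < e" using nat_approx_posE by blast
    then obtain d where "d\<in>F n" "x \<in> ball d (1/Suc n)" using F x by blast
    moreover have "dist x d < e" using calculation n by (simp add: dist_commute)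
    ultimately show "\<exists>d\<in>\<Union>n. F n. dist x d < e" by blast
  qed
qed

lemma sigma_dense:
  fixes X :: "'a::metric_space set" and Y :: "'b::metric_space set"
  assumes "sigma_compact X" "sigma_compact Y" "closed C"
  shows "\<exists>D. countable D \<and> D \<subseteq> (X \<times> Y) \<inter> C \<and>
     (\<forall>x\<in>(X \<times> Y) \<inter> C. \<forall>e>0. \<exists>d\<in>D. dist x d < e)"
proof -
  obtain KX where KX: "\<And>n::nat. compact (KX n)" "X = (\<Union>n::nat. KX n)"
    using assms(1) unfolding sigma_compact_def by blast
  obtain KY where KY: "\<And>n::nat. compact (KY n)" "Y = (\<Union>n::nat. KY n)"
    using assms(2) unfolding sigma_compact_def by blast
  have "\<forall>ij. \<exists>D. countable D \<and> D \<subseteq> (KX (fst ij) \<times> KY (snd ij)) \<inter> C \<and>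
     (\<forall>x\<in>(KX (fst ij) \<times> KY (snd ij)) \<inter> C. \<forall>e>0. \<exists>d\<in>D. dist x d < e)"
  proof
    fix ij :: "nat \<times> nat"
    show "\<exists>D. countable D \<and> D \<subseteq> (KX (fst ij) \<times> KY (snd ij)) \<inter> C \<and>
     (\<forall>x\<in>(KX (fst ij) \<times> KY (snd ij)) \<inter> C. \<forall>e>0. \<exists>d\<in>D. dist x d < e)"
      by (rule compact_countable_dense[OF compact_Int_closed[OF compact_Times[OF KX(1) KY(1)] assms(3)]])
  qed
  then have "\<exists>DD. \<forall>ij. countable (DD ij) \<and> DD ij \<subseteq> (KX (fst ij) \<times> KY (snd ij)) \<inter> C \<and>
     (\<forall>x\<in>(KX (fst ij) \<times> KY (snd ij)) \<inter> C. \<forall>e>0. \<exists>d\<in>DD ij. dist x d < e)"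
    by (rule choice)
  then obtain DD where DD: "\<And>ij. countable (DD ij) \<and> DD ij \<subseteq> (KX (fst ij) \<times> KY (snd ij)) \<inter> C \<and>
     (\<forall>x\<in>(KX (fst ij) \<times> KY (snd ij)) \<inter> C. \<forall>e>0. \<exists>d\<in>DD ij. dist x d < e)"
    by blast
  show ?thesis
  proof (intro exI[of _ "\<Union>ij. DD ij"] conjI ballI allI impI)
    show "countable (\<Union>ij. DD ij)" using DD by simp
    show "(\<Union>ij. DD ij) \<subseteq> (X \<times> Y) \<inter> C" using DD KX KY by fastforce
    fix x and e :: real assume x: "x \<in> (X \<times> Y) \<inter> C" and e: "e > 0"
    then obtain i j where "x \<in> (KX i \<times> KY j) \<inter> C" using KX KY by (cases x) auto
    then show "\<exists>d\<in>\<Union>ij. DD ij. dist x d < e" using DD[of "(i,j)"] e by fastforce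
  qed
qed

theorem lemma2p5:
  fixes X :: "'a::metric_space set" and Y :: "'b::metric_space set"
    and T :: "('a \<times> 'b) set"
  assumes "sigma_compact X" and "sigma_compact Y"
    and "\<forall>x\<in>X. x islimpt X"
    and "closedin (top_of_set (X \<times> Y)) T"
  shows "\<exists>(A::'a set) (f::'a \<Rightarrow> 'b). countable A \<and> A \<subseteq> X \<and> f ` A \<subseteq> Y \<and>
           acc_points_in (X \<times> Y) (graph_on A f) = T"
proof (cases "T = {}")
  case True
  show ?thesis
    by (intro exI[of _ "{}"] exI[of _ "\<lambda>x. undefined"]) (simp add: True graph_on_def acc_points_in_def)
next
  case Tne: False
  obtain C where C: "closed C" "T = (X \<times> Y) \<inter> C" using closedin_closed[THEN iffD1, OF assms(4)] by blast
  obtain D where D: "countable D" "D \<subseteq> T" "\<And>x e. x \<in> T \<Longrightarrow> e > 0 \<Longrightarrow> \<exists>d\<in>D. dist x d < e"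
  proof -
    from sigma_dense[OF assms(1,2) C(1)] obtain D where
      "countable D" "D \<subseteq> (X \<times> Y) \<inter> C" "\<forall>x\<in>(X \<times> Y) \<inter> C. \<forall>e>0. \<exists>d\<in>D. dist x d < e"
      by blast
    then show ?thesis using that unfolding C(2)[symmetric] by blast
  qed
  have Dne: "D \<noteq> {}"
  proof -
    obtain t where "t \<in> T" using Tne by blast
    from D(3)[OF this, of 1] show ?thesis by auto
  qed
  define d where "d = from_nat_into D"
  have rd: "range d = D" unfolding d_def using range_from_nat_into[OF Dne D(1)] .
  define xs where "xs n = fst (d n)" for n
  define ys where "ys n = snd (d n)" for n
  have dxy: "d n = (xs n, ys n)" for n by (simp add: xs_def ys_def)
  have dT: "d n \<in> T" for n using rd D(2) by blast
  have xsX: "xs n \<in> X" and ysY: "ys n \<in> Y" for n using dT[of n] C(2) dxy[of n] by auto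
  define nn where "nn m = fst (prod_decode m)" for m
  define kk where "kk m = snd (prod_decode m)" for m
  define r where "r m = 1 / real (Suc (nn m + kk m))" for m
  define P where "P m z \<longleftrightarrow> z \<in> X \<and> z \<noteq> xs (nn m) \<and> dist z (xs (nn m)) < r m" for m z
  have exP: "\<exists>z. P m z \<and> z \<notin> S" if "finite S" for m S
  proof -
    have "r m > 0" by (simp add: r_def)
    then have "infinite (X \<inter> ball (xs (nn m)) (r m))"
      using assms(3) xsX islimpt_eq_infinite_ball by blast
    then have "infinite (X \<inter> ball (xs (nn m)) (r m) - insert (xs (nn m)) S)"
      using Diff_infinite_finite[of "insert (xs (nn m)) S"] that by blast
    then obtain z where "z \<in> X \<inter> ball (xs (nn m)) (r m) - insert (xs (nn m)) S"
      using infinite_imp_nonempty by blast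
    then show ?thesis unfolding P_def by (auto simp: dist_commute)
  qed
  define L where "L = rec_nat [] (\<lambda>m l. l @ [SOME z. P m z \<and> z \<notin> set l])"
  have L0: "L 0 = []" and LS: "L (Suc m) = L m @ [SOME z. P m z \<and> z \<notin> set (L m)]" for m
    by (simp_all add: L_def)
  have lenL: "length (L m) = m" for m by (induction m) (simp_all add: L0 LS)
  define a where "a i = L (Suc i) ! i" for i
  have Lnth: "\<forall>i<m. L m ! i = a i" for m
  proof (induction m)
    case 0 then show ?case by simp
  next
    case (Suc m)
    show ?case
    proof (intro allI impI)
      fix i assume "i < Suc m"
      then consider "i < m" | "i = m" by linarith
      then show "L (Suc m) ! i = a i"
      proof cases
        case 1 then show ?thesis using Suc LS[of m] lenL[of m] by (simp add: nth_append)
      next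
        case 2 then show ?thesis by (simp add: a_def)
      qed
    qed
  qed
  have setL: "set (L m) = a ` {..<m}" for m
  proof -
    have "set (L m) = (!) (L m) ` {0..<m}" using nth_image[of m "L m"] lenL[of m] by simp
    also have "\<dots> = a ` {..<m}" using Lnth[of m]
      by (simp add: atLeast0LessThan)
    finally show ?thesis .
  qed
  have aeq: "a m = (SOME z. P m z \<and> z \<notin> set (L m))" for m
    using LS[of m] lenL[of m] by (simp add: a_def nth_append)
  have aP: "P m (a m)" and anot: "a m \<notin> a ` {..<m}" for m
    using someI_ex[OF exP[of "set (L m)" m]] aeq[of m] setL[of m] by auto
  have inja: "inj a"
  proof (rule injI)
    fix i j assume "a i = a j"
    show "i = j"
    proof (rule ccontr)
      assume "i \<noteq> j"
      then consider "i < j" | "j < i" by linarith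
      then show False
      proof cases
        case 1 then have "a j \<in> a ` {..<j}" using \<open>a i = a j\<close> by (metis imageI lessThan_iff)
        then show False using anot[of j] by blast
      next
        case 2 then have "a i \<in> a ` {..<i}" using \<open>a i = a j\<close> by (metis imageI lessThan_iff)
        then show False using anot[of i] by blast
      qed
    qed
  qed
  define A where "A = range a"
  define f where "f z = ys (nn (inv a z))" for z
  have fa: "f (a m) = ys (nn m)" for m by (simp add: f_def inv_f_f[OF inja])
  define g where "g m = (a m, ys (nn m))" for m
  have G: "graph_on A f = range g"
    unfolding graph_on_def A_def g_def by (auto simp: fa)
  have injg: "inj g" using inja by (auto simp: g_def inj_def)
  have distg: "dist (g m) (d (nn m)) < r m" for m
    using aP[of m] by (simp add: g_def dxy dist_Pair_Pair P_def)
  have TXY: "T \<subseteq> X \<times> Y" using C(2) by blast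
  have "acc_points_in (X \<times> Y) (range g) = T"
  proof
    show "acc_points_in (X \<times> Y) (range g) \<subseteq> T"
    proof
      fix p assume "p \<in> acc_points_in (X \<times> Y) (range g)"
      then have pXY: "p \<in> X \<times> Y" and pl: "p islimpt range g" by (auto simp: acc_points_in_def)
      have "p \<in> C"
      proof (rule closed_approachable[OF C(1), THEN iffD1], intro allI impI)
        fix e :: real assume e: "e > 0"
        then obtain N where N: "1 / real (Suc N) < e/2" using nat_approx_posE[of "e/2"] by auto
        define M where "M = {m. nn m + kk m < N}"
        have "M \<subseteq> prod_encode ` ({..<N} \<times> {..<N})"
        proof
          fix m assume "m \<in> M"
          then have h: "prod_decode m \<in> {..<N} \<times> {..<N}" by (cases "prod_decode m") (auto simp: M_def nn_def kk_def)
          show "m \<in> prod_encode ` ({..<N} \<times> {..<N})"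
            by (rule image_eqI[of _ _ "prod_decode m"]) (simp_all add: h)
        qed
        then have finM: "finite M" by (rule finite_subset) auto
        have "infinite (range g \<inter> ball p (e/2))" using pl e unfolding islimpt_eq_infinite_ball by (meson half_gt_zero)
        then have "\<not> range g \<inter> ball p (e/2) \<subseteq> g ` M" using finM finite_subset by blast
        then obtain z where z: "z \<in> range g" "z \<in> ball p (e/2)" "z \<notin> g ` M" by blast
        then obtain m where zm: "z = g m" by blast
        have m: "m \<notin> M" "dist p (g m) < e/2" using z zm by auto
        have "r m \<le> 1 / real (Suc N)" using m(1)
          by (simp add: r_def M_def frac_le)
        then have "dist p (d (nn m)) < e"
          using dist_triangle[of p "d (nn m)" "g m"] distg[of m] m(2) N by linarith
        moreover have "d (nn m) \<in> C" using dT C(2) by blast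
        ultimately show "\<exists>y\<in>C. dist y p < e" by (auto simp: dist_commute)
      qed
      then show "p \<in> T" using pXY C(2) by blast
    qed
  next
    show "T \<subseteq> acc_points_in (X \<times> Y) (range g)"
    proof
      fix t assume t: "t \<in> T"
      have "t islimpt range g"
        unfolding islimpt_eq_infinite_ball
      proof (intro allI impI)
        fix e :: real assume e: "e > 0"
        obtain dd where dd: "dd \<in> D" "dist t dd < e/2" using D(3)[OF t, of "e/2"] e by auto
        then obtain n where n: "d n = dd" using rd by blast
        obtain K where K: "1 / real (Suc K) < e/2" using nat_approx_posE[of "e/2"] e by auto
        define h where "h k = g (prod_encode (n, k))" for k
        have "inj (\<lambda>k. prod_encode (n, k))" by (auto simp: inj_def)
        then have "inj h" unfolding h_def using inj_compose[OF injg] by (simp add: comp_def)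
        then have "infinite (h ` {K..})" by (simp add: finite_image_iff inj_on_subset infinite_Ici)
        moreover have "h ` {K..} \<subseteq> range g \<inter> ball t e"
        proof
          fix z assume "z \<in> h ` {K..}"
          then obtain k where k: "k \<ge> K" "z = h k" by auto
          define m where "m = prod_encode (n, k)"
          have nm: "nn m = n" "kk m = k" by (simp_all add: m_def nn_def kk_def)
          have "r m \<le> 1 / real (Suc K)" using k(1) by (simp add: r_def nm frac_le)
          then have "dist z dd < e/2" using distg[of m] k(2) n nm K by (simp add: h_def m_def)
          then have "dist t z < e" using dd(2) dist_triangle[of t z dd] by (simp add: dist_commute)
          then show "z \<in> range g \<inter> ball t e" using k(2) by (auto simp: h_def)
        qed
        ultimately show "infinite (range g \<inter> ball t e)" using finite_subset by blast
      qed
      then show "t \<in> acc_points_in (X \<times> Y) (range g)" using t TXY by (auto simp: acc_points_in_def)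
    qed
  qed
  note acc = this
  have cA: "countable A" by (simp add: A_def)
  have AX: "A \<subseteq> X" using aP by (auto simp: A_def P_def)
  have fY: "f ` A \<subseteq> Y" using ysY by (auto simp: A_def fa)
  show ?thesis
  proof -
    have "countable A \<and> A \<subseteq> X \<and> f ` A \<subseteq> Y \<and> acc_points_in (X \<times> Y) (graph_on A f) = T"
      unfolding G using cA AX fY acc by blast
    then show ?thesis by blast
  qed
qed

end
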